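(* If $\mathbb{X}\in p\mathsf{Ch}^*_\mathbb{Q}$ is an $\mathbb{I}$-cell complex, then $\mathbb{X}$ is locally compact in degrees $k>0$, i.e. the persistence module $\mathbb{X}^k$ is locally compact for every $k>0$.
   Context: $p\mathsf{Ch}^*_\mathbb{Q}=\mathsf{Fun}([0,\infty),\mathsf{Ch}^*_\mathbb{Q})$, non-negatively graded rational cochain complexes; $\mathbb{X}^k$ is the persistence module of degree-$k$ cochains. $S^k=\mathbb{Q}$ in degree $k$; $D^k$ ($k\ge1$) is $\mathbb{Q}$ in degrees $k-1,k$ with identity differential; $D^0=0$. For $0\le s<t<\infty$, $\mathbb{S}^k_{[s,t)}$ is $0$ at $r<s$, $S^k$ at $s\le r<t$, $D^k$ at $r\ge t$; $\mathbb{S}^k_{[s,\infty)}$ is $0$ at $r<s$ and $S^k$ at $r\ge s$; $\mathbb{D}^k_s$ is $0$ at $r<s$ and $D^k$ at $r\ge s$. $\mathbb{I}=\{\mathbb{S}^k_{[s,t)}\to\mathbb{D}^k_s: k\in\mathbb{N},\ 0\le s<t\le\infty\}$. An $\mathbb{I}$-cell complex is an object $\mathbb{X}$ such that $0\to\mathbb{X}$ is a transfinite composite of maps each of which is a pushout of a direct sum (over an arbitrary set) of maps in $\mathbb{I}$. A persistence module is locally compact if every element lies in a submodule that is a compact object of the category of persistence modules (equivalently a finite direct sum of interval modules $\mathbb{I}_{[a,b)}$). *)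

theory Defs
  imports Main "HOL-Library.Extended_Real" "HOL-Library.Function_Algebras"
begin

class qvs = ab_group_add +
  fixes qscale :: "rat \<Rightarrow> 'a \<Rightarrow> 'a"
  assumes qscale_right_distrib: "qscale a (x + y) = qscale a x + qscale a y"
    and qscale_left_distrib: "qscale (a + b) x = qscale a x + qscale b x"
    and qscale_assoc: "qscale a (qscale b x) = qscale (a * b) x"
    and qscale_one: "qscale 1 x = x"

instantiation rat :: qvs
begin
definition qscale_rat :: "rat \<Rightarrow> rat \<Rightarrow> rat" where "qscale_rat a x = a * x"
instance by standard (auto simp: qscale_rat_def algebra_simps)
end

instantiation "fun" :: (type, qvs) qvs
begin
definition qscale_fun :: "rat \<Rightarrow> ('a \<Rightarrow> 'b) \<Rightarrow> 'a \<Rightarrow> 'b" where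
  "qscale_fun a f = (\<lambda>i. qscale a (f i))"
instance by standard (auto simp: qscale_fun_def fun_eq_iff qscale_right_distrib
    qscale_left_distrib qscale_assoc qscale_one)
end

definition qsubspace :: "'a::qvs set \<Rightarrow> bool" where
  "qsubspace V \<longleftrightarrow> 0 \<in> V \<and> (\<forall>x\<in>V. \<forall>y\<in>V. x + y \<in> V) \<and> (\<forall>a. \<forall>x\<in>V. qscale a x \<in> V)"

definition qlinear_on :: "'a::qvs set \<Rightarrow> 'b::qvs set \<Rightarrow> ('a \<Rightarrow> 'b) \<Rightarrow> bool" where
  "qlinear_on V W f \<longleftrightarrow> (\<forall>x\<in>V. f x \<in> W) \<and> (\<forall>x\<in>V. \<forall>y\<in>V. f (x + y) = f x + f y)
     \<and> (\<forall>a. \<forall>x\<in>V. f (qscale a x) = qscale a (f x))"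

definition is_pmod :: "(real \<Rightarrow> 'a::qvs set) \<Rightarrow> (real \<Rightarrow> real \<Rightarrow> 'a \<Rightarrow> 'a) \<Rightarrow> bool" where
  "is_pmod P T \<longleftrightarrow> (\<forall>r\<ge>0. qsubspace (P r))
     \<and> (\<forall>r s. 0 \<le> r \<and> r \<le> s \<longrightarrow> qlinear_on (P r) (P s) (T r s))
     \<and> (\<forall>r\<ge>0. \<forall>x\<in>P r. T r r x = x)
     \<and> (\<forall>r s u. 0 \<le> r \<and> r \<le> s \<and> s \<le> u \<longrightarrow> (\<forall>x\<in>P r. T s u (T r s x) = T r u x))"

record 'a pcx =
  cx :: "real \<Rightarrow> nat \<Rightarrow> 'a set"
  tr :: "real \<Rightarrow> real \<Rightarrow> nat \<Rightarrow> 'a \<Rightarrow> 'a"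
  df :: "real \<Rightarrow> nat \<Rightarrow> 'a \<Rightarrow> 'a"

text \<open>cx X r k = X^k_r, tr X r s k = structure map X^k_r \<rightarrow> X^k_s, df X r k = differential
  X^k_r \<rightarrow> X^(k+1)_r.\<close>
definition is_pcx :: "'a::qvs pcx \<Rightarrow> bool" where
  "is_pcx X \<longleftrightarrow> (\<forall>k. is_pmod (\<lambda>r. cx X r k) (\<lambda>r s. tr X r s k))
     \<and> (\<forall>r\<ge>0. \<forall>k. qlinear_on (cx X r k) (cx X r (Suc k)) (df X r k))
     \<and> (\<forall>r\<ge>0. \<forall>k. \<forall>x\<in>cx X r k. df X r (Suc k) (df X r k x) = 0)
     \<and> (\<forall>r s k. 0 \<le> r \<and> r \<le> s \<longrightarrow>
          (\<forall>x\<in>cx X r k. tr X r s (Suc k) (df X r k x) = df X s k (tr X r s k x)))"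

definition pcx_hom :: "'a::qvs pcx \<Rightarrow> 'b::qvs pcx \<Rightarrow> (real \<Rightarrow> nat \<Rightarrow> 'a \<Rightarrow> 'b) \<Rightarrow> bool" where
  "pcx_hom X Y f \<longleftrightarrow> (\<forall>r\<ge>0. \<forall>k. qlinear_on (cx X r k) (cx Y r k) (f r k))
     \<and> (\<forall>r s k. 0 \<le> r \<and> r \<le> s \<longrightarrow>
          (\<forall>x\<in>cx X r k. f s k (tr X r s k x) = tr Y r s k (f r k x)))
     \<and> (\<forall>r\<ge>0. \<forall>k. \<forall>x\<in>cx X r k. f r (Suc k) (df X r k x) = df Y r k (f r k x))"

text \<open>cell k s t, for t > s, is the sphere S^k_[s,t) (t = \<infinity> allowed);
  cell k s (ereal s) is the disk D^k_s. Both are realised with elements in rat.\<close>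
definition cell_cx :: "nat \<Rightarrow> real \<Rightarrow> ereal \<Rightarrow> real \<Rightarrow> nat \<Rightarrow> rat set" where
  "cell_cx k s t r m =
     (if (s \<le> r \<and> ereal r < t \<and> m = k) \<or> (s \<le> r \<and> t \<le> ereal r \<and> 1 \<le> k \<and> (m = k - 1 \<or> m = k))
      then UNIV else {0})"

definition cell :: "nat \<Rightarrow> real \<Rightarrow> ereal \<Rightarrow> rat pcx" where
  "cell k s t = \<lparr>cx = cell_cx k s t,
      tr = (\<lambda>r r' m x. if cell_cx k s t r' m = UNIV then x else 0),
      df = (\<lambda>r m x. if t \<le> ereal r \<and> 1 \<le> k \<and> m = k - 1 then x else 0)\<rparr>"

abbreviation Sph :: "nat \<Rightarrow> real \<Rightarrow> ereal \<Rightarrow> rat pcx" where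
  "Sph k s t \<equiv> cell k s t"

abbreviation Dsk :: "nat \<Rightarrow> real \<Rightarrow> rat pcx" where
  "Dsk k s \<equiv> cell k s (ereal s)"

definition gen_map :: "nat \<Rightarrow> real \<Rightarrow> real \<Rightarrow> nat \<Rightarrow> rat \<Rightarrow> rat" where
  "gen_map k s r m x = (if cell_cx k s (ereal s) r m = UNIV then x else 0)"

text \<open>g : Y \<rightarrow> Y' is a pushout of the direct sum over J of the generating maps
  S^{kk j}_[ss j, tt j) \<rightarrow> D^{kk j}_{ss j}, along attaching maps f j, with h j : D_j \<rightarrow> Y'
  the other leg of the square. Colimits in pCh are computed pointwise, and a commutative
  square of Q-vector spaces A \<rightarrow> B, A \<rightarrow> C, B \<rightarrow> P, C \<rightarrow> P is a pushout iff B \<oplus> C \<rightarrow> P is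
  surjective with kernel the image of A; that is what is written out below (with A, C the
  direct sums, whose elements are finitely supported families).\<close>
definition cell_pushout ::
  "'b::qvs pcx \<Rightarrow> 'b pcx \<Rightarrow> (real \<Rightarrow> nat \<Rightarrow> 'b \<Rightarrow> 'b) \<Rightarrow> 'j set \<Rightarrow> ('j \<Rightarrow> nat) \<Rightarrow> ('j \<Rightarrow> real)
   \<Rightarrow> ('j \<Rightarrow> ereal) \<Rightarrow> ('j \<Rightarrow> real \<Rightarrow> nat \<Rightarrow> rat \<Rightarrow> 'b) \<Rightarrow> ('j \<Rightarrow> real \<Rightarrow> nat \<Rightarrow> rat \<Rightarrow> 'b) \<Rightarrow> bool" where
  "cell_pushout Y Y' g J kk ss tt f h \<longleftrightarrow>
     (\<forall>j\<in>J. 0 \<le> ss j \<and> ereal (ss j) < tt j)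
     \<and> pcx_hom Y Y' g
     \<and> (\<forall>j\<in>J. pcx_hom (Sph (kk j) (ss j) (tt j)) Y (f j))
     \<and> (\<forall>j\<in>J. pcx_hom (Dsk (kk j) (ss j)) Y' (h j))
     \<and> (\<forall>j\<in>J. \<forall>r\<ge>0. \<forall>m. \<forall>x\<in>cell_cx (kk j) (ss j) (tt j) r m.
          g r m (f j r m x) = h j r m (gen_map (kk j) (ss j) r m x))
     \<and> (\<forall>r\<ge>0. \<forall>m. \<forall>z\<in>cx Y' r m. \<exists>y\<in>cx Y r m. \<exists>d::'j \<Rightarrow> rat.
          finite {j. d j \<noteq> 0} \<and> {j. d j \<noteq> 0} \<subseteq> J
          \<and> (\<forall>j. d j \<in> cell_cx (kk j) (ss j) (ereal (ss j)) r m)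
          \<and> z = g r m y + (\<Sum>j\<in>{j. d j \<noteq> 0}. h j r m (d j)))
     \<and> (\<forall>r\<ge>0. \<forall>m. \<forall>y\<in>cx Y r m. \<forall>d::'j \<Rightarrow> rat.
          finite {j. d j \<noteq> 0} \<and> {j. d j \<noteq> 0} \<subseteq> J
          \<and> (\<forall>j. d j \<in> cell_cx (kk j) (ss j) (ereal (ss j)) r m)
          \<and> g r m y + (\<Sum>j\<in>{j. d j \<noteq> 0}. h j r m (d j)) = 0 \<longrightarrow>
          (\<exists>a::'j \<Rightarrow> rat. finite {j. a j \<noteq> 0} \<and> {j. a j \<noteq> 0} \<subseteq> J
             \<and> (\<forall>j. a j \<in> cell_cx (kk j) (ss j) (tt j) r m)
             \<and> y = (\<Sum>j\<in>{j. a j \<noteq> 0}. f j r m (a j))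
             \<and> (\<forall>j. d j = - gen_map (kk j) (ss j) r m (a j))))"

text \<open>Z with cocone c is the colimit of the chain (Y \<gamma>, G \<gamma> \<delta>) indexed by A \<subseteq> Field ord
  (computed pointwise; directed colimits of Q-vector spaces).\<close>
definition is_chain_colimit ::
  "('i \<times> 'i) set \<Rightarrow> 'i set \<Rightarrow> ('i \<Rightarrow> 'b::qvs pcx) \<Rightarrow> ('i \<Rightarrow> 'i \<Rightarrow> real \<Rightarrow> nat \<Rightarrow> 'b \<Rightarrow> 'b)
   \<Rightarrow> 'c::qvs pcx \<Rightarrow> ('i \<Rightarrow> real \<Rightarrow> nat \<Rightarrow> 'b \<Rightarrow> 'c) \<Rightarrow> bool" where
  "is_chain_colimit ord A Y G Z c \<longleftrightarrow> is_pcx Z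
     \<and> (\<forall>\<gamma>\<in>A. pcx_hom (Y \<gamma>) Z (c \<gamma>))
     \<and> (\<forall>\<gamma>\<in>A. \<forall>\<delta>\<in>A. (\<gamma>, \<delta>) \<in> ord \<longrightarrow>
          (\<forall>r\<ge>0. \<forall>m. \<forall>y\<in>cx (Y \<gamma>) r m. c \<delta> r m (G \<gamma> \<delta> r m y) = c \<gamma> r m y))
     \<and> (\<forall>r\<ge>0. \<forall>m. \<forall>z\<in>cx Z r m. z = 0 \<or> (\<exists>\<gamma>\<in>A. \<exists>y\<in>cx (Y \<gamma>) r m. z = c \<gamma> r m y))
     \<and> (\<forall>r\<ge>0. \<forall>m. \<forall>\<gamma>\<in>A. \<forall>y\<in>cx (Y \<gamma>) r m. c \<gamma> r m y = 0 \<longrightarrow>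
          (\<exists>\<delta>\<in>A. (\<gamma>, \<delta>) \<in> ord \<and> G \<gamma> \<delta> r m y = 0))"

definition wo_succ :: "('i \<times> 'i) set \<Rightarrow> 'i \<Rightarrow> 'i \<Rightarrow> bool" where
  "wo_succ ord \<beta> \<gamma> \<longleftrightarrow> (\<beta>, \<gamma>) \<in> ord \<and> \<beta> \<noteq> \<gamma>
     \<and> (\<forall>\<delta>. (\<beta>, \<delta>) \<in> ord \<and> (\<delta>, \<gamma>) \<in> ord \<longrightarrow> \<delta> = \<beta> \<or> \<delta> = \<gamma>)"

definition wo_limit :: "('i \<times> 'i) set \<Rightarrow> 'i \<Rightarrow> bool" where
  "wo_limit ord \<beta> \<longleftrightarrow> \<beta> \<in> Field ord \<and> (\<exists>\<gamma>. (\<gamma>, \<beta>) \<in> ord \<and> \<gamma> \<noteq> \<beta>)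
     \<and> \<not> (\<exists>\<alpha>. wo_succ ord \<alpha> \<beta>)"

text \<open>X is an I-cell complex: 0 \<rightarrow> X is a transfinite composite (indexed by a well-order
  ord on a set of elements of type 'i) of maps each a pushout of a direct sum of maps of I.
  The intermediate objects live in type 'b, the cells of each step are indexed by a set of
  type 'j. Since the theorem quantifies over these types, this amounts to existence of such
  a presentation.\<close>
definition Icell_complex :: "'i itself \<Rightarrow> 'b::qvs itself \<Rightarrow> 'j itself \<Rightarrow> 'a::qvs pcx \<Rightarrow> bool" where
  "Icell_complex _ _ _ X \<longleftrightarrow>
    (\<exists>(ord::('i \<times> 'i) set) (Y::'i \<Rightarrow> 'b pcx) (G::'i \<Rightarrow> 'i \<Rightarrow> real \<Rightarrow> nat \<Rightarrow> 'b \<Rightarrow> 'b)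
       (c::'i \<Rightarrow> real \<Rightarrow> nat \<Rightarrow> 'b \<Rightarrow> 'a) (J::'i \<Rightarrow> 'j set) kk ss tt f h.
      Well_order ord
      \<and> (\<forall>\<beta>\<in>Field ord. is_pcx (Y \<beta>))
      \<and> (\<forall>\<beta> \<gamma>. (\<beta>, \<gamma>) \<in> ord \<longrightarrow> pcx_hom (Y \<beta>) (Y \<gamma>) (G \<beta> \<gamma>))
      \<and> (\<forall>\<beta>\<in>Field ord. \<forall>r\<ge>0. \<forall>m. \<forall>y\<in>cx (Y \<beta>) r m. G \<beta> \<beta> r m y = y)
      \<and> (\<forall>\<beta> \<gamma> \<delta>. (\<beta>, \<gamma>) \<in> ord \<and> (\<gamma>, \<delta>) \<in> ord \<longrightarrow>
           (\<forall>r\<ge>0. \<forall>m. \<forall>y\<in>cx (Y \<beta>) r m. G \<gamma> \<delta> r m (G \<beta> \<gamma> r m y) = G \<beta> \<delta> r m y))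
      \<and> (\<forall>\<beta>\<in>Field ord. (\<forall>\<gamma>\<in>Field ord. (\<beta>, \<gamma>) \<in> ord) \<longrightarrow> (\<forall>r\<ge>0. \<forall>m. cx (Y \<beta>) r m = {0}))
      \<and> (\<forall>\<beta> \<gamma>. wo_succ ord \<beta> \<gamma> \<longrightarrow>
           cell_pushout (Y \<beta>) (Y \<gamma>) (G \<beta> \<gamma>) (J \<beta>) (kk \<beta>) (ss \<beta>) (tt \<beta>) (f \<beta>) (h \<beta>))
      \<and> (\<forall>\<beta>. wo_limit ord \<beta> \<longrightarrow>
           is_chain_colimit ord {\<gamma>. (\<gamma>, \<beta>) \<in> ord \<and> \<gamma> \<noteq> \<beta>} Y G (Y \<beta>) (\<lambda>\<gamma>. G \<gamma> \<beta>))
      \<and> is_chain_colimit ord (Field ord) Y G X c)"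

text \<open>Finite direct sum of interval modules I_[a i, b i), i < n, realised on nat \<Rightarrow> rat.\<close>
definition isum_cx :: "nat \<Rightarrow> (nat \<Rightarrow> real) \<Rightarrow> (nat \<Rightarrow> ereal) \<Rightarrow> real \<Rightarrow> (nat \<Rightarrow> rat) set" where
  "isum_cx n a b r = {v. \<forall>i. v i \<noteq> 0 \<longrightarrow> i < n \<and> a i \<le> r \<and> ereal r < b i}"

definition isum_tr :: "nat \<Rightarrow> (nat \<Rightarrow> real) \<Rightarrow> (nat \<Rightarrow> ereal) \<Rightarrow> real \<Rightarrow> real \<Rightarrow> (nat \<Rightarrow> rat) \<Rightarrow> nat \<Rightarrow> rat" where
  "isum_tr n a b r s v = (\<lambda>i. if a i \<le> s \<and> ereal s < b i then v i else 0)"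

definition fin_interval_sum :: "(real \<Rightarrow> 'a::qvs set) \<Rightarrow> (real \<Rightarrow> real \<Rightarrow> 'a \<Rightarrow> 'a) \<Rightarrow> bool" where
  "fin_interval_sum M T \<longleftrightarrow> (\<exists>n a b \<phi>. (\<forall>i<n. 0 \<le> a i \<and> ereal (a i) < b i)
     \<and> (\<forall>r\<ge>0. qlinear_on (isum_cx n a b r) (M r) (\<phi> r) \<and> bij_betw (\<phi> r) (isum_cx n a b r) (M r))
     \<and> (\<forall>r s. 0 \<le> r \<and> r \<le> s \<longrightarrow>
          (\<forall>v\<in>isum_cx n a b r. \<phi> s (isum_tr n a b r s v) = T r s (\<phi> r v))))"

text \<open>Every element lies in a submodule which is compact (= a finite direct sum of interval
  modules).\<close>
definition locally_compact_pmod :: "(real \<Rightarrow> 'a::qvs set) \<Rightarrow> (real \<Rightarrow> real \<Rightarrow> 'a \<Rightarrow> 'a) \<Rightarrow> bool" where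
  "locally_compact_pmod P T \<longleftrightarrow> (\<forall>r0\<ge>0. \<forall>x\<in>P r0. \<exists>M.
      (\<forall>r\<ge>0. qsubspace (M r) \<and> M r \<subseteq> P r)
      \<and> (\<forall>r s. 0 \<le> r \<and> r \<le> s \<longrightarrow> T r s ` M r \<subseteq> M s)
      \<and> x \<in> M r0 \<and> fin_interval_sum M T)"

end

theory Submission
  imports Defs
begin

lemma qscale_zero_left: "qscale 0 (x::'a::qvs) = 0"
proof -
  have "qscale (0+0) x = qscale 0 x + qscale 0 x" by (rule qscale_left_distrib)
  then show ?thesis by simp
qed

lemma qscale_zero_right: "qscale q (0::'a::qvs) = 0"
proof -
  have "qscale q (0+0) = qscale q (0::'a) + qscale q 0" by (rule qscale_right_distrib)
  then show ?thesis by simp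
qed

lemma qscale_eq_zero: assumes "qscale q (x::'a::qvs) = 0" "q \<noteq> 0" shows "x = 0"
proof -
  have "x = qscale (inverse q * q) x" using assms(2) qscale_one[of x] by simp
  also have "\<dots> = qscale (inverse q) (qscale q x)" by (simp add: qscale_assoc)
  also have "\<dots> = 0" using assms(1) qscale_zero_right by simp
  finally show ?thesis .
qed

lemma qlinear_zero: "qlinear_on V W f \<Longrightarrow> 0 \<in> V \<Longrightarrow> f 0 = 0"
  unfolding qlinear_on_def by (metis add.right_neutral add_left_cancel)

lemma qlinear_sum:
  assumes "qlinear_on V W f" "qsubspace V" "finite S" "\<forall>j\<in>S. v j \<in> V"
  shows "f (\<Sum>j\<in>S. v j) = (\<Sum>j\<in>S. f (v j)) \<and> (\<Sum>j\<in>S. v j) \<in> V"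
  using assms(3,4)
proof (induction S rule: finite_induct)
  case empty
  then show ?case using assms(1,2) qlinear_zero unfolding qsubspace_def by auto
next
  case (insert x F)
  have IH: "f (sum v F) = (\<Sum>j\<in>F. f (v j))" "sum v F \<in> V" using insert by auto
  have vx: "v x \<in> V" using insert.prems by simp
  have add: "\<forall>a\<in>V. \<forall>b\<in>V. f (a + b) = f a + f b" using assms(1) unfolding qlinear_on_def by blast
  have cl: "\<forall>a\<in>V. \<forall>b\<in>V. a + b \<in> V" using assms(2) unfolding qsubspace_def by blast
  have "sum v (insert x F) = v x + sum v F" using insert.hyps by simp
  moreover have "(\<Sum>j\<in>insert x F. f (v j)) = f (v x) + (\<Sum>j\<in>F. f (v j))" using insert.hyps by simp
  ultimately show ?case using IH vx add cl by simp
qed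

lemma pcx_pmod: "is_pcx X \<Longrightarrow> is_pmod (\<lambda>r. cx X r k) (\<lambda>r s. tr X r s k)"
  unfolding is_pcx_def by (elim conjE) (erule allE)

lemma pcx_sub: assumes "is_pcx X" "0 \<le> r" shows "qsubspace (cx X r k)"
proof -
  have "\<forall>r\<ge>0. qsubspace (cx X r k)" using pcx_pmod[OF assms(1), of k] unfolding is_pmod_def by (elim conjE)
  then show ?thesis using assms(2) by simp
qed

lemma pcx_tr: assumes "is_pcx X" "0 \<le> r" "r \<le> s" shows "qlinear_on (cx X r k) (cx X s k) (tr X r s k)"
proof -
  have "\<forall>r s. 0 \<le> r \<and> r \<le> s \<longrightarrow> qlinear_on (cx X r k) (cx X s k) (tr X r s k)"
    using pcx_pmod[OF assms(1), of k] unfolding is_pmod_def by (elim conjE)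
  then show ?thesis using assms(2,3) by simp
qed

lemma pcx_comp: assumes "is_pcx X" "0 \<le> r" "r \<le> s" "s \<le> u" "x \<in> cx X r k"
  shows "tr X s u k (tr X r s k x) = tr X r u k x"
proof -
  have "\<forall>r s u. 0 \<le> r \<and> r \<le> s \<and> s \<le> u \<longrightarrow> (\<forall>x\<in>cx X r k. tr X s u k (tr X r s k x) = tr X r u k x)"
    using pcx_pmod[OF assms(1), of k] unfolding is_pmod_def by (elim conjE)
  then show ?thesis using assms(2-5) by simp
qed

lemma pcx_zero: "is_pcx X \<Longrightarrow> 0 \<le> r \<Longrightarrow> 0 \<in> cx X r k"
  using pcx_sub qsubspace_def by blast

lemma hom_lin: assumes "pcx_hom X Y f" "0 \<le> r" shows "qlinear_on (cx X r k) (cx Y r k) (f r k)"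
proof -
  have "\<forall>r\<ge>0. \<forall>k. qlinear_on (cx X r k) (cx Y r k) (f r k)" using assms(1) unfolding pcx_hom_def by (elim conjE)
  then show ?thesis using assms(2) by simp
qed

lemma hom_tr: assumes "pcx_hom X Y f" "0 \<le> r" "r \<le> s" "x \<in> cx X r k"
  shows "f s k (tr X r s k x) = tr Y r s k (f r k x)"
proof -
  have "\<forall>r s k. 0 \<le> r \<and> r \<le> s \<longrightarrow> (\<forall>x\<in>cx X r k. f s k (tr X r s k x) = tr Y r s k (f r k x))"
    using assms(1) unfolding pcx_hom_def by (elim conjE)
  then show ?thesis using assms(2-4) by simp
qed

lemma lin_mem: "qlinear_on V W f \<Longrightarrow> x \<in> V \<Longrightarrow> f x \<in> W"
  unfolding qlinear_on_def by blast

lemma lin_add: "qlinear_on V W f \<Longrightarrow> x \<in> V \<Longrightarrow> y \<in> V \<Longrightarrow> f (x + y) = f x + f y"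
  unfolding qlinear_on_def by blast

lemma lin_scale: "qlinear_on V W f \<Longrightarrow> x \<in> V \<Longrightarrow> f (qscale a x) = qscale a (f x)"
  unfolding qlinear_on_def by blast

lemma hom_mem: "pcx_hom X Y f \<Longrightarrow> 0 \<le> r \<Longrightarrow> x \<in> cx X r k \<Longrightarrow> f r k x \<in> cx Y r k"
  using hom_lin lin_mem by metis

lemma cell_cx_UNIV: "cell_cx k s t r m = UNIV \<longleftrightarrow>
   ((s \<le> r \<and> ereal r < t \<and> m = k) \<or> (s \<le> r \<and> t \<le> ereal r \<and> 1 \<le> k \<and> (m = k - 1 \<or> m = k)))"
proof -
  have "{0::rat} \<noteq> UNIV"
  proof
    assume "{0::rat} = UNIV"
    then have "(1::rat) \<in> {0}" by simp
    then show False by simp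
  qed
  then show ?thesis unfolding cell_cx_def by auto
qed

lemma cell_cx_mem: "x \<in> cell_cx k s t r m \<longleftrightarrow> x = 0 \<or>
   ((s \<le> r \<and> ereal r < t \<and> m = k) \<or> (s \<le> r \<and> t \<le> ereal r \<and> 1 \<le> k \<and> (m = k - 1 \<or> m = k)))"
  unfolding cell_cx_def by auto

lemma cx_cell[simp]: "cx (cell k s t) = cell_cx k s t"
  unfolding cell_def by simp

lemma tr_cell[simp]: "tr (cell k s t) r r' m x = (if cell_cx k s t r' m = UNIV then x else 0)"
  unfolding cell_def by simp

lemma ereal_le_lemma: "(\<forall>r>b. t \<le> ereal r) \<Longrightarrow> t \<le> ereal (b::real)"
proof (rule ccontr)
  assume a: "\<forall>r>b. t \<le> ereal r" "\<not> t \<le> ereal b"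
  then have "ereal b < t" by auto
  then obtain z where z: "ereal b < z" "z < t" using dense by blast
  then obtain r where "z = ereal r" by (cases z) auto
  then show False using a z by auto
qed

definition ri_prop :: "'b::qvs pcx \<Rightarrow> bool" where
  "ri_prop Y \<longleftrightarrow> (\<forall>b\<ge>0. \<forall>m>0. \<forall>y\<in>cx Y b m. (\<forall>r>b. tr Y b r m y = 0) \<longrightarrow> y = 0)"

definition inj_prop :: "'b::qvs pcx \<Rightarrow> (real \<Rightarrow> nat \<Rightarrow> 'b \<Rightarrow> 'c::qvs) \<Rightarrow> bool" where
  "inj_prop Y g \<longleftrightarrow> (\<forall>r\<ge>0. \<forall>m>0. \<forall>y\<in>cx Y r m. g r m y = 0 \<longrightarrow> y = 0)"

lemma po_ker: "cell_pushout Y Y' g J kk ss tt f h \<Longrightarrow> (\<forall>r\<ge>0. \<forall>m. \<forall>y\<in>cx Y r m. \<forall>d::'j \<Rightarrow> rat.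
          finite {j. d j \<noteq> 0} \<and> {j. d j \<noteq> 0} \<subseteq> J
          \<and> (\<forall>j. d j \<in> cell_cx (kk j) (ss j) (ereal (ss j)) r m)
          \<and> g r m y + (\<Sum>j\<in>{j. d j \<noteq> 0}. h j r m (d j)) = 0 \<longrightarrow>
          (\<exists>a::'j \<Rightarrow> rat. finite {j. a j \<noteq> 0} \<and> {j. a j \<noteq> 0} \<subseteq> J
             \<and> (\<forall>j. a j \<in> cell_cx (kk j) (ss j) (tt j) r m)
             \<and> y = (\<Sum>j\<in>{j. a j \<noteq> 0}. f j r m (a j))
             \<and> (\<forall>j. d j = - gen_map (kk j) (ss j) r m (a j))))"
  unfolding cell_pushout_def by (elim conjE)

lemma po_surj: "cell_pushout Y Y' g J kk ss tt f h \<Longrightarrow> (\<forall>r\<ge>0. \<forall>m. \<forall>z\<in>cx Y' r m. \<exists>y\<in>cx Y r m. \<exists>d::'j \<Rightarrow> rat.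
          finite {j. d j \<noteq> 0} \<and> {j. d j \<noteq> 0} \<subseteq> J
          \<and> (\<forall>j. d j \<in> cell_cx (kk j) (ss j) (ereal (ss j)) r m)
          \<and> z = g r m y + (\<Sum>j\<in>{j. d j \<noteq> 0}. h j r m (d j)))"
  unfolding cell_pushout_def by (elim conjE)

lemma po_sq: "cell_pushout Y Y' g J kk ss tt f h \<Longrightarrow> (\<forall>j\<in>J. \<forall>r\<ge>0. \<forall>m. \<forall>x\<in>cell_cx (kk j) (ss j) (tt j) r m.
          g r m (f j r m x) = h j r m (gen_map (kk j) (ss j) r m x))"
  unfolding cell_pushout_def by (elim conjE)

lemma po_g: "cell_pushout Y Y' g J kk ss tt f h \<Longrightarrow> pcx_hom Y Y' g"
  unfolding cell_pushout_def by (elim conjE)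

lemma po_f: "cell_pushout Y Y' g J kk ss tt f h \<Longrightarrow> (\<forall>j\<in>J. pcx_hom (Sph (kk j) (ss j) (tt j)) Y (f j))"
  unfolding cell_pushout_def by (elim conjE)

lemma po_h: "cell_pushout Y Y' g J kk ss tt f h \<Longrightarrow> (\<forall>j\<in>J. pcx_hom (Dsk (kk j) (ss j)) Y' (h j))"
  unfolding cell_pushout_def by (elim conjE)

lemma gen_map_zero[simp]: "gen_map k s r m 0 = 0"
  unfolding gen_map_def by simp

lemma po_inj:
  assumes P: "cell_pushout Y Y' g J kk ss tt f h"
  shows "inj_prop Y g"
  unfolding inj_prop_def
proof (intro allI impI ballI)
  fix r m y assume r: "0 \<le> r" "0 < m" and y: "y \<in> cx Y r m" and gy: "g r m y = 0"
  have "finite {j. (0::rat) \<noteq> 0} \<and> {j. (0::rat) \<noteq> 0} \<subseteq> J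
          \<and> (\<forall>j. (0::rat) \<in> cell_cx (kk j) (ss j) (ereal (ss j)) r m)
          \<and> g r m y + (\<Sum>j\<in>{j. (0::rat) \<noteq> 0}. h j r m 0) = 0"
    using gy by (simp add: cell_cx_mem)
  then obtain a where a: "\<forall>j. a j \<in> cell_cx (kk j) (ss j) (tt j) r m"
     "y = (\<Sum>j\<in>{j. a j \<noteq> 0}. f j r m (a j))"
     "\<forall>j. (0::rat) = - gen_map (kk j) (ss j) r m (a j)"
    using po_ker[OF P, rule_format, where d="\<lambda>j. 0", OF r(1) y] by blast
  have "{j. a j \<noteq> 0} = {}"
  proof (rule ccontr)
    assume "{j. a j \<noteq> 0} \<noteq> {}"
    then obtain j where j: "a j \<noteq> 0" by blast
    then have "(ss j \<le> r \<and> ereal r < tt j \<and> m = kk j) \<or> (ss j \<le> r \<and> tt j \<le> ereal r \<and> 1 \<le> kk j \<and> (m = kk j - 1 \<or> m = kk j))"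
      using a(1) cell_cx_mem by blast
    then have "cell_cx (kk j) (ss j) (ereal (ss j)) r m = UNIV"
      using r(2) by (auto simp: cell_cx_UNIV)
    then have "gen_map (kk j) (ss j) r m (a j) = a j" unfolding gen_map_def by simp
    then show False using a(3) j by simp
  qed
  then show "y = 0" using a(2) by simp
qed

lemma sum_mem: assumes "qsubspace V" "finite S" "\<forall>j\<in>S. v j \<in> V" shows "sum v S \<in> V"
  using assms(2,3)
proof (induction S rule: finite_induct)
  case empty then show ?case using assms(1) unfolding qsubspace_def by simp
next
  case (insert x F) then show ?case using assms(1) unfolding qsubspace_def by simp
qed

lemma cell_D_UNIV_mono: "cell_cx k s (ereal s) b m = UNIV \<Longrightarrow> b \<le> r \<Longrightarrow> cell_cx k s (ereal s) r m = UNIV"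
  unfolding cell_cx_UNIV by auto

lemma cell_nz: "x \<in> cell_cx k s t r m \<Longrightarrow> x \<noteq> 0 \<Longrightarrow> cell_cx k s t r m = UNIV"
  unfolding cell_cx_def by (auto split: if_splits)

lemma po_ri:
  assumes P: "cell_pushout Y Y' g J kk ss tt f h" and pY: "is_pcx Y" and pY': "is_pcx Y'"
    and RI: "ri_prop Y"
  shows "ri_prop Y'"
  unfolding ri_prop_def
proof (intro allI impI ballI)
  fix b m z assume b: "0 \<le> b" and m: "0 < m" and z: "z \<in> cx Y' b m"
    and kill: "\<forall>r>b. tr Y' b r m z = 0"
  obtain y d where y: "y \<in> cx Y b m" and fin: "finite {j. d j \<noteq> 0}" and DJ: "{j. d j \<noteq> 0} \<subseteq> J"
    and dc: "\<forall>j. d j \<in> cell_cx (kk j) (ss j) (ereal (ss j)) b m"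
    and zeq: "z = g b m y + (\<Sum>j\<in>{j. d j \<noteq> 0}. h j b m (d j))"
    using po_surj[OF P, rule_format, OF b z] by blast
  define D where "D = {j. d j \<noteq> 0}"
  have fin': "finite D" using fin D_def by simp
  have DJ': "\<And>j. j \<in> D \<Longrightarrow> j \<in> J" using DJ D_def by auto
  have Dcell: "\<And>j. j \<in> D \<Longrightarrow> cell_cx (kk j) (ss j) (ereal (ss j)) b m = UNIV"
    using dc cell_nz D_def by blast
  have Dr: "\<And>j r. j \<in> D \<Longrightarrow> b \<le> r \<Longrightarrow> cell_cx (kk j) (ss j) (ereal (ss j)) r m = UNIV"
    using Dcell cell_D_UNIV_mono by blast
  have hom_g: "pcx_hom Y Y' g" using po_g[OF P] .
  have hom_h: "\<And>j. j \<in> D \<Longrightarrow> pcx_hom (Dsk (kk j) (ss j)) Y' (h j)" using po_h[OF P] DJ' by blast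
  have hom_f: "\<And>j. j \<in> D \<Longrightarrow> pcx_hom (Sph (kk j) (ss j) (tt j)) Y (f j)" using po_f[OF P] DJ' by blast
  have hmem: "\<And>j. j \<in> D \<Longrightarrow> h j b m (d j) \<in> cx Y' b m"
    using hom_mem[OF hom_h b] dc by simp
  have gmem: "g b m y \<in> cx Y' b m" using hom_mem[OF hom_g b y] .
  have smem: "(\<Sum>j\<in>D. h j b m (d j)) \<in> cx Y' b m"
    using sum_mem[OF pcx_sub[OF pY' b] fin', of "\<lambda>j. h j b m (d j)"] hmem by blast
  have zeq': "z = g b m y + (\<Sum>j\<in>D. h j b m (d j))" using zeq D_def by simp
  have Tz: "tr Y' b r m z = g r m (tr Y b r m y) + (\<Sum>j\<in>D. h j r m (d j))" if r: "b < r" for r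
  proof -
    have L: "qlinear_on (cx Y' b m) (cx Y' r m) (tr Y' b r m)" using pcx_tr[OF pY' b] r by simp
    have "tr Y' b r m z = tr Y' b r m (g b m y) + tr Y' b r m (\<Sum>j\<in>D. h j b m (d j))"
      using lin_add[OF L gmem smem] zeq' by simp
    also have "tr Y' b r m (g b m y) = g r m (tr Y b r m y)"
      using hom_tr[OF hom_g b _ y, of r] r by simp
    also have "tr Y' b r m (\<Sum>j\<in>D. h j b m (d j)) = (\<Sum>j\<in>D. tr Y' b r m (h j b m (d j)))"
      using conjunct1[OF qlinear_sum[OF L pcx_sub[OF pY' b] fin', of "\<lambda>j. h j b m (d j)"]] hmem by blast
    also have "\<dots> = (\<Sum>j\<in>D. h j r m (d j))"
    proof (rule sum.cong)
      fix j assume j: "j \<in> D"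
      have "tr Y' b r m (h j b m (d j)) = h j r m (tr (Dsk (kk j) (ss j)) b r m (d j))"
        using hom_tr[OF hom_h[OF j] b, of r "d j" m] r dc by simp
      also have "\<dots> = h j r m (d j)" using Dr[OF j, of r] r by simp
      finally show "tr Y' b r m (h j b m (d j)) = h j r m (d j)" .
    qed simp
    finally show ?thesis .
  qed
  have Scell: "d j \<in> cell_cx (kk j) (ss j) (tt j) b m" if j: "j \<in> D" for j
  proof -
    have c: "ss j \<le> b \<and> 1 \<le> kk j \<and> (m = kk j - 1 \<or> m = kk j)"
      using Dcell[OF j] unfolding cell_cx_UNIV by auto
    show ?thesis
    proof (cases "m = kk j")
      case True
      then show ?thesis using c by (cases "ereal b < tt j") (auto simp: cell_cx_mem)
    next
      case False
      have "tt j \<le> ereal r" if r: "b < r" for r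
      proof -
        have r0: "0 \<le> r" using b r by simp
        have yr: "tr Y b r m y \<in> cx Y r m" using lin_mem[OF pcx_tr[OF pY b, of r m] y] r by simp
        have dcr: "\<forall>j. d j \<in> cell_cx (kk j) (ss j) (ereal (ss j)) r m"
        proof
          fix i show "d i \<in> cell_cx (kk i) (ss i) (ereal (ss i)) r m"
            using Dr[of i r] r D_def by (cases "d i = 0") (auto simp: cell_cx_mem)
        qed
        have sz: "g r m (tr Y b r m y) + (\<Sum>j\<in>{j. d j \<noteq> 0}. h j r m (d j)) = 0"
          using Tz[OF r] kill r D_def by simp
        obtain a where a: "\<forall>j. a j \<in> cell_cx (kk j) (ss j) (tt j) r m"
          "\<forall>j. d j = - gen_map (kk j) (ss j) r m (a j)"
          using po_ker[OF P, rule_format, OF r0 yr, of d, OF conjI[OF fin conjI[OF DJ conjI[OF dcr sz]]]] by blast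
        have "a j \<noteq> 0"
        proof
          assume "a j = 0"
          then have "d j = 0" using a(2) by simp
          then show False using j D_def by simp
        qed
        then have "cell_cx (kk j) (ss j) (tt j) r m = UNIV" using a(1) cell_nz by blast
        then show ?thesis using False unfolding cell_cx_UNIV by auto
      qed
      then have "tt j \<le> ereal b" by (rule ereal_le_lemma[rule_format])
      then show ?thesis using c by (auto simp: cell_cx_mem)
    qed
  qed
  have fmem: "\<And>j. j \<in> D \<Longrightarrow> f j b m (d j) \<in> cx Y b m"
    using hom_mem[OF hom_f b] Scell by simp
  have hg: "\<And>j. j \<in> D \<Longrightarrow> h j b m (d j) = g b m (f j b m (d j))"
  proof -
    fix j assume j: "j \<in> D"
    have "g b m (f j b m (d j)) = h j b m (gen_map (kk j) (ss j) b m (d j))"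
      using po_sq[OF P, rule_format, OF DJ'[OF j] b Scell[OF j]] .
    also have "gen_map (kk j) (ss j) b m (d j) = d j" using Dcell[OF j] unfolding gen_map_def by simp
    finally show "h j b m (d j) = g b m (f j b m (d j))" by simp
  qed
  define y2 where "y2 = y + (\<Sum>j\<in>D. f j b m (d j))"
  have fsum: "(\<Sum>j\<in>D. f j b m (d j)) \<in> cx Y b m"
    using sum_mem[OF pcx_sub[OF pY b] fin', of "\<lambda>j. f j b m (d j)"] fmem by blast
  have y2mem: "y2 \<in> cx Y b m" using y fsum pcx_sub[OF pY b] unfolding y2_def qsubspace_def by blast
  have Lg: "qlinear_on (cx Y b m) (cx Y' b m) (g b m)" using hom_lin[OF hom_g b] .
  have "g b m y2 = g b m y + g b m (\<Sum>j\<in>D. f j b m (d j))"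
    unfolding y2_def using lin_add[OF Lg y fsum] .
  also have "g b m (\<Sum>j\<in>D. f j b m (d j)) = (\<Sum>j\<in>D. g b m (f j b m (d j)))"
    using conjunct1[OF qlinear_sum[OF Lg pcx_sub[OF pY b] fin', of "\<lambda>j. f j b m (d j)"]] fmem by blast
  also have "\<dots> = (\<Sum>j\<in>D. h j b m (d j))" using hg by simp
  finally have zg: "z = g b m y2" using zeq' by simp
  have "tr Y b r m y2 = 0" if r: "b < r" for r
  proof -
    have r0: "0 \<le> r" using b r by simp
    have "g r m (tr Y b r m y2) = tr Y' b r m (g b m y2)"
      using hom_tr[OF hom_g b _ y2mem, of r] r by simp
    also have "\<dots> = 0" using kill r zg by simp
    finally have "g r m (tr Y b r m y2) = 0" .
    moreover have "tr Y b r m y2 \<in> cx Y r m" using lin_mem[OF pcx_tr[OF pY b, of r m] y2mem] r by simp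
    ultimately show ?thesis using po_inj[OF P] r0 m unfolding inj_prop_def by blast
  qed
  then have "y2 = 0" using RI b m y2mem unfolding ri_prop_def by blast
  then show "z = 0" using zg qlinear_zero[OF Lg] pcx_zero[OF pY b] by simp
qed

lemma colim_pcx: "is_chain_colimit ord A Y G Z c \<Longrightarrow> is_pcx Z"
  unfolding is_chain_colimit_def by (elim conjE)

lemma colim_hom: "is_chain_colimit ord A Y G Z c \<Longrightarrow> (\<forall>\<gamma>\<in>A. pcx_hom (Y \<gamma>) Z (c \<gamma>))"
  unfolding is_chain_colimit_def by (elim conjE)

lemma colim_surj: "is_chain_colimit ord A Y G Z c \<Longrightarrow>
   (\<forall>r\<ge>0. \<forall>m. \<forall>z\<in>cx Z r m. z = 0 \<or> (\<exists>\<gamma>\<in>A. \<exists>y\<in>cx (Y \<gamma>) r m. z = c \<gamma> r m y))"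
  unfolding is_chain_colimit_def by (elim conjE)

lemma colim_ker: "is_chain_colimit ord A Y G Z c \<Longrightarrow>
   (\<forall>r\<ge>0. \<forall>m. \<forall>\<gamma>\<in>A. \<forall>y\<in>cx (Y \<gamma>) r m. c \<gamma> r m y = 0 \<longrightarrow>
          (\<exists>\<delta>\<in>A. (\<gamma>, \<delta>) \<in> ord \<and> G \<gamma> \<delta> r m y = 0))"
  unfolding is_chain_colimit_def by (elim conjE)

lemma colim_ri:
  assumes C: "is_chain_colimit ord A Y G Z c" and pY: "\<forall>\<delta>\<in>A. is_pcx (Y \<delta>)"
    and R: "\<forall>\<delta>\<in>A. ri_prop (Y \<delta>)"
    and I: "\<forall>\<delta>\<in>A. \<forall>\<delta>'\<in>A. (\<delta>, \<delta>') \<in> ord \<longrightarrow> inj_prop (Y \<delta>) (G \<delta> \<delta>')"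
  shows "ri_prop Z"
  unfolding ri_prop_def
proof (intro allI impI ballI)
  fix b m z assume b: "0 \<le> b" and m: "0 < m" and z: "z \<in> cx Z b m"
    and kill: "\<forall>r>b. tr Z b r m z = 0"
  show "z = 0"
  proof (cases "z = 0")
    case False
    then obtain \<delta> y where d: "\<delta> \<in> A" and y: "y \<in> cx (Y \<delta>) b m" and zy: "z = c \<delta> b m y"
      using colim_surj[OF C, rule_format, OF b z] by blast
    have H: "pcx_hom (Y \<delta>) Z (c \<delta>)" using colim_hom[OF C] d by blast
    have p: "is_pcx (Y \<delta>)" using pY d by blast
    have "tr (Y \<delta>) b r m y = 0" if r: "b < r" for r
    proof -
      have r0: "0 \<le> r" using b r by simp
      have ym: "tr (Y \<delta>) b r m y \<in> cx (Y \<delta>) r m" using lin_mem[OF pcx_tr[OF p b, of r m] y] r by simp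
      have "c \<delta> r m (tr (Y \<delta>) b r m y) = tr Z b r m (c \<delta> b m y)"
        using hom_tr[OF H b _ y, of r] r by simp
      also have "\<dots> = 0" using kill r zy by simp
      finally have "c \<delta> r m (tr (Y \<delta>) b r m y) = 0" .
      then obtain \<delta>' where d': "\<delta>' \<in> A" "(\<delta>, \<delta>') \<in> ord" "G \<delta> \<delta>' r m (tr (Y \<delta>) b r m y) = 0"
        using colim_ker[OF C, rule_format, OF r0 d ym] by blast
      have "inj_prop (Y \<delta>) (G \<delta> \<delta>')" using I d d' by blast
      then show ?thesis using d'(3) ym r0 m unfolding inj_prop_def by blast
    qed
    then have "y = 0" using R d b m y unfolding ri_prop_def by blast
    then show ?thesis using zy qlinear_zero[OF hom_lin[OF H b] pcx_zero[OF p b]] by simp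
  qed simp
qed

lemma main_ind:
  assumes WO: "Well_order ord"
  and pc: "\<forall>\<beta>\<in>Field ord. is_pcx (Y \<beta>)"
  and hom: "\<forall>\<beta> \<gamma>. (\<beta>, \<gamma>) \<in> ord \<longrightarrow> pcx_hom (Y \<beta>) (Y \<gamma>) (G \<beta> \<gamma>)"
  and idm: "\<forall>\<beta>\<in>Field ord. \<forall>r\<ge>0. \<forall>m. \<forall>y\<in>cx (Y \<beta>) r m. G \<beta> \<beta> r m y = y"
  and comp: "\<forall>\<beta> \<gamma> \<delta>. (\<beta>, \<gamma>) \<in> ord \<and> (\<gamma>, \<delta>) \<in> ord \<longrightarrow>
           (\<forall>r\<ge>0. \<forall>m. \<forall>y\<in>cx (Y \<beta>) r m. G \<gamma> \<delta> r m (G \<beta> \<gamma> r m y) = G \<beta> \<delta> r m y)"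
  and bot: "\<forall>\<beta>\<in>Field ord. (\<forall>\<gamma>\<in>Field ord. (\<beta>, \<gamma>) \<in> ord) \<longrightarrow> (\<forall>r\<ge>0. \<forall>m. cx (Y \<beta>) r m = {0})"
  and succ: "\<forall>\<beta> \<gamma>. wo_succ ord \<beta> \<gamma> \<longrightarrow>
           cell_pushout (Y \<beta>) (Y \<gamma>) (G \<beta> \<gamma>) (J \<beta>) (kk \<beta>) (ss \<beta>) (tt \<beta>) (f \<beta>) (h \<beta>)"
  and lim: "\<forall>\<beta>. wo_limit ord \<beta> \<longrightarrow>
           is_chain_colimit ord {\<gamma>. (\<gamma>, \<beta>) \<in> ord \<and> \<gamma> \<noteq> \<beta>} Y G (Y \<beta>) (\<lambda>\<gamma>. G \<gamma> \<beta>)"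
  shows "\<gamma> \<in> Field ord \<longrightarrow> ri_prop (Y \<gamma>) \<and> (\<forall>\<beta>. (\<beta>, \<gamma>) \<in> ord \<longrightarrow> inj_prop (Y \<beta>) (G \<beta> \<gamma>))"
proof -
  have W: "wo_rel ord" using WO by (simp add: wo_rel_def)
  have refl: "\<And>a. a \<in> Field ord \<Longrightarrow> (a, a) \<in> ord"
    using wo_rel.REFL[OF W] unfolding refl_on_def by blast
  have anti: "\<And>a b. (a, b) \<in> ord \<Longrightarrow> (b, a) \<in> ord \<Longrightarrow> a = b"
    using wo_rel.ANTISYM[OF W] unfolding antisym_def by blast
  have tot: "\<And>a b. a \<in> Field ord \<Longrightarrow> b \<in> Field ord \<Longrightarrow> (a, b) \<in> ord \<or> (b, a) \<in> ord"
    using wo_rel.TOTALS[OF W] by blast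
  have F1: "\<And>a b. (a, b) \<in> ord \<Longrightarrow> a \<in> Field ord" by (rule FieldI1)
  have F2: "\<And>a b. (a, b) \<in> ord \<Longrightarrow> b \<in> Field ord" by (rule FieldI2)
  have inj_id: "inj_prop (Y x) (G x x)" if "x \<in> Field ord" for x
    using idm that unfolding inj_prop_def by auto
  show ?thesis
  proof (rule wo_rel.well_order_induct[OF W, where P="\<lambda>\<gamma>. \<gamma> \<in> Field ord \<longrightarrow> ri_prop (Y \<gamma>) \<and> (\<forall>\<beta>. (\<beta>, \<gamma>) \<in> ord \<longrightarrow> inj_prop (Y \<beta>) (G \<beta> \<gamma>))"])
    fix x assume IH: "\<forall>y. y \<noteq> x \<and> (y, x) \<in> ord \<longrightarrow> (y \<in> Field ord \<longrightarrow> ri_prop (Y y) \<and> (\<forall>\<beta>. (\<beta>, y) \<in> ord \<longrightarrow> inj_prop (Y \<beta>) (G \<beta> y)))"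
    show "x \<in> Field ord \<longrightarrow> ri_prop (Y x) \<and> (\<forall>\<beta>. (\<beta>, x) \<in> ord \<longrightarrow> inj_prop (Y \<beta>) (G \<beta> x))"
    proof
      assume xF: "x \<in> Field ord"
      show "ri_prop (Y x) \<and> (\<forall>\<beta>. (\<beta>, x) \<in> ord \<longrightarrow> inj_prop (Y \<beta>) (G \<beta> x))"
      proof (cases "\<exists>\<alpha>. wo_succ ord \<alpha> x")
        case True
        then obtain \<alpha> where a: "wo_succ ord \<alpha> x" by blast
        have ax: "(\<alpha>, x) \<in> ord" "\<alpha> \<noteq> x" using a unfolding wo_succ_def by auto
        have aF: "\<alpha> \<in> Field ord" using F1[OF ax(1)] .
        have IHa: "ri_prop (Y \<alpha>)" "\<And>\<beta>. (\<beta>, \<alpha>) \<in> ord \<Longrightarrow> inj_prop (Y \<beta>) (G \<beta> \<alpha>)"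
          using IH ax aF by blast+
        have PO: "cell_pushout (Y \<alpha>) (Y x) (G \<alpha> x) (J \<alpha>) (kk \<alpha>) (ss \<alpha>) (tt \<alpha>) (f \<alpha>) (h \<alpha>)"
          using succ a by blast
        have ri: "ri_prop (Y x)" using po_ri[OF PO] pc aF xF IHa(1) by blast
        have "inj_prop (Y \<beta>) (G \<beta> x)" if bx: "(\<beta>, x) \<in> ord" for \<beta>
        proof (cases "\<beta> = x")
          case True then show ?thesis using inj_id xF by simp
        next
          case False
          have bF: "\<beta> \<in> Field ord" using F1[OF bx] .
          have ba: "(\<beta>, \<alpha>) \<in> ord"
          proof -
            have "(\<beta>, \<alpha>) \<in> ord \<or> (\<alpha>, \<beta>) \<in> ord" using tot bF aF by blast
            moreover have "(\<alpha>, \<beta>) \<in> ord \<Longrightarrow> \<beta> = \<alpha>" using a bx False unfolding wo_succ_def by blast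
            ultimately show ?thesis using refl aF by blast
          qed
          show ?thesis unfolding inj_prop_def
          proof (intro allI impI ballI)
            fix r m y assume r: "0 \<le> r" "0 < m" and y: "y \<in> cx (Y \<beta>) r m" and g: "G \<beta> x r m y = 0"
            have "G \<alpha> x r m (G \<beta> \<alpha> r m y) = G \<beta> x r m y" using comp ba ax(1) r y by blast
            then have "G \<alpha> x r m (G \<beta> \<alpha> r m y) = 0" using g by simp
            moreover have "G \<beta> \<alpha> r m y \<in> cx (Y \<alpha>) r m" using hom_mem[OF _ r(1) y] hom ba by blast
            ultimately have "G \<beta> \<alpha> r m y = 0" using po_inj[OF PO] r unfolding inj_prop_def by blast
            then show "y = 0" using IHa(2)[OF ba] r y unfolding inj_prop_def by blast
          qed
        qed
        then show ?thesis using ri by blast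
      next
        case nsucc: False
        show ?thesis
        proof (cases "\<exists>\<delta>. (\<delta>, x) \<in> ord \<and> \<delta> \<noteq> x")
          case True
          have wl: "wo_limit ord x" unfolding wo_limit_def using xF True nsucc by blast
          define A where "A = {\<gamma>. (\<gamma>, x) \<in> ord \<and> \<gamma> \<noteq> x}"
          have C: "is_chain_colimit ord A Y G (Y x) (\<lambda>\<gamma>. G \<gamma> x)" using lim wl A_def by blast
          have IHA: "\<And>\<delta>. \<delta> \<in> A \<Longrightarrow> ri_prop (Y \<delta>) \<and> (\<forall>\<beta>. (\<beta>, \<delta>) \<in> ord \<longrightarrow> inj_prop (Y \<beta>) (G \<beta> \<delta>))"
            using IH F1 A_def by blast
          have ri: "ri_prop (Y x)"
          proof (rule colim_ri[OF C])
            show "\<forall>\<delta>\<in>A. is_pcx (Y \<delta>)" using pc F1 A_def by blast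
            show "\<forall>\<delta>\<in>A. ri_prop (Y \<delta>)" using IHA by blast
            show "\<forall>\<delta>\<in>A. \<forall>\<delta>'\<in>A. (\<delta>, \<delta>') \<in> ord \<longrightarrow> inj_prop (Y \<delta>) (G \<delta> \<delta>')" using IHA by blast
          qed
          have "inj_prop (Y \<beta>) (G \<beta> x)" if bx: "(\<beta>, x) \<in> ord" for \<beta>
          proof (cases "\<beta> = x")
            case True then show ?thesis using inj_id xF by simp
          next
            case False
            then have bA: "\<beta> \<in> A" using bx A_def by simp
            show ?thesis unfolding inj_prop_def
            proof (intro allI impI ballI)
              fix r m y assume r: "0 \<le> r" "0 < m" and y: "y \<in> cx (Y \<beta>) r m" and g: "G \<beta> x r m y = 0"
              obtain \<delta> where d: "\<delta> \<in> A" "(\<beta>, \<delta>) \<in> ord" "G \<beta> \<delta> r m y = 0"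
                using colim_ker[OF C, rule_format, OF r(1) bA y] g by blast
              then show "y = 0" using IHA[OF d(1)] r y unfolding inj_prop_def by blast
            qed
          qed
          then show ?thesis using ri by blast
        next
          case False
          have min: "\<forall>\<gamma>\<in>Field ord. (x, \<gamma>) \<in> ord"
          proof
            fix \<gamma> assume gF: "\<gamma> \<in> Field ord"
            have "(x, \<gamma>) \<in> ord \<or> (\<gamma>, x) \<in> ord" using tot xF gF by blast
            then show "(x, \<gamma>) \<in> ord" using False refl xF by blast
          qed
          have z: "\<forall>r\<ge>0. \<forall>m. cx (Y x) r m = {0}" using bot xF min by blast
          have ri: "ri_prop (Y x)" unfolding ri_prop_def using z by auto
          have "inj_prop (Y \<beta>) (G \<beta> x)" if bx: "(\<beta>, x) \<in> ord" for \<beta>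
          proof -
            have "\<beta> = x" using False bx by blast
            then show ?thesis using inj_id xF by simp
          qed
          then show ?thesis using ri by blast
        qed
      qed
    qed
  qed
qed

lemma pmod_sub: "is_pmod P T \<Longrightarrow> 0 \<le> r \<Longrightarrow> qsubspace (P r)"
  unfolding is_pmod_def by blast
lemma pmod_lin: "is_pmod P T \<Longrightarrow> 0 \<le> r \<Longrightarrow> r \<le> s \<Longrightarrow> qlinear_on (P r) (P s) (T r s)"
  unfolding is_pmod_def by blast
lemma pmod_id: "is_pmod P T \<Longrightarrow> 0 \<le> r \<Longrightarrow> x \<in> P r \<Longrightarrow> T r r x = x"
  unfolding is_pmod_def by blast
lemma pmod_comp: "is_pmod P T \<Longrightarrow> 0 \<le> r \<Longrightarrow> r \<le> s \<Longrightarrow> s \<le> u \<Longrightarrow> x \<in> P r \<Longrightarrow> T s u (T r s x) = T r u x"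
  unfolding is_pmod_def by blast

lemma cyclic:
  assumes pm: "is_pmod P T" and r0: "0 \<le> r0" and x: "x \<in> P r0"
    and HB: "\<forall>r\<ge>r0. (T r0 r x \<noteq> 0 \<longleftrightarrow> ereal r < B)"
  shows "\<exists>M. (\<forall>r\<ge>0. qsubspace (M r) \<and> M r \<subseteq> P r)
      \<and> (\<forall>r s. 0 \<le> r \<and> r \<le> s \<longrightarrow> T r s ` M r \<subseteq> M s)
      \<and> x \<in> M r0 \<and> fin_interval_sum M T"
proof -
  define xr where "xr r = T r0 r x" for r
  define M where "M r = (if r0 \<le> r then range (\<lambda>q. qscale q (xr r)) else {0})" for r
  define \<phi> where "\<phi> r v = (if r0 \<le> r then qscale (v (0::nat)) (xr r) else 0)" for r and v :: "nat \<Rightarrow> rat"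
  define n where "n = (if ereal r0 < B then 1 else (0::nat))"
  define S where "S r = {v :: nat \<Rightarrow> rat. \<forall>i. v i \<noteq> 0 \<longrightarrow> i = 0 \<and> r0 \<le> r \<and> ereal r < B}" for r
  have xrP: "xr r \<in> P r" if "r0 \<le> r" for r
    unfolding xr_def using lin_mem[OF pmod_lin[OF pm r0 that] x] .
  have xr_tr: "T r s (xr r) = xr s" if "r0 \<le> r" "r \<le> s" for r s
    unfolding xr_def using pmod_comp[OF pm r0 that x] .
  have alive: "xr r \<noteq> 0 \<longleftrightarrow> ereal r < B" if "r0 \<le> r" for r
    unfolding xr_def using HB that by blast
  have sub: "qsubspace (M r) \<and> M r \<subseteq> P r" if r: "0 \<le> r" for r
  proof (cases "r0 \<le> r")
    case True
    have Psub: "qsubspace (P r)" using pmod_sub[OF pm r] .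
    have "qsubspace (range (\<lambda>q. qscale q (xr r)))"
      unfolding qsubspace_def
    proof (intro conjI ballI allI)
      show "0 \<in> range (\<lambda>q. qscale q (xr r))" using qscale_zero_left[of "xr r"] by (metis rangeI)
    next
      fix u v assume "u \<in> range (\<lambda>q. qscale q (xr r))" "v \<in> range (\<lambda>q. qscale q (xr r))"
      then obtain a b where "u = qscale a (xr r)" "v = qscale b (xr r)" by blast
      then have "u + v = qscale (a + b) (xr r)" by (simp add: qscale_left_distrib)
      then show "u + v \<in> range (\<lambda>q. qscale q (xr r))" by blast
    next
      fix c u assume "u \<in> range (\<lambda>q. qscale q (xr r))"
      then obtain a where "u = qscale a (xr r)" by blast
      then have "qscale c u = qscale (c * a) (xr r)" by (simp add: qscale_assoc)
      then show "qscale c u \<in> range (\<lambda>q. qscale q (xr r))" by blast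
    qed
    moreover have "range (\<lambda>q. qscale q (xr r)) \<subseteq> P r"
      using Psub xrP[OF True] unfolding qsubspace_def by blast
    ultimately show ?thesis using True M_def by simp
  next
    case False
    have "\<forall>a. qscale a (0::'a) = 0" using qscale_zero_right by blast
    then show ?thesis using False M_def pmod_sub[OF pm r] unfolding qsubspace_def by simp
  qed
  have zM: "0 \<in> M r" if "0 \<le> r" for r using sub[OF that] unfolding qsubspace_def by blast
  have trM: "T r s ` M r \<subseteq> M s" if rs: "0 \<le> r" "r \<le> s" for r s
  proof (cases "r0 \<le> r")
    case True
    have L: "qlinear_on (P r) (P s) (T r s)" using pmod_lin[OF pm rs] .
    show ?thesis
    proof
      fix w assume "w \<in> T r s ` M r"
      then obtain q where w: "w = T r s (qscale q (xr r))" using True M_def by auto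
      have "w = qscale q (T r s (xr r))" using lin_scale[OF L xrP[OF True]] w by simp
      also have "\<dots> = qscale q (xr s)" using xr_tr[OF True rs(2)] by simp
      finally show "w \<in> M s" using True rs M_def by auto
    qed
  next
    case False
    have "T r s 0 = 0" using qlinear_zero[OF pmod_lin[OF pm rs]] pmod_sub[OF pm rs(1)] unfolding qsubspace_def by blast
    then show ?thesis using False M_def zM[of s] rs by auto
  qed
  have xM: "x \<in> M r0"
  proof -
    have "xr r0 = x" unfolding xr_def using pmod_id[OF pm r0 x] .
    then have "x = qscale 1 (xr r0)" by (simp add: qscale_one)
    then show ?thesis unfolding M_def by auto
  qed
  have Seq: "isum_cx n (\<lambda>_. r0) (\<lambda>_. B) r = S r" for r
  proof (cases "ereal r0 < B")
    case True then show ?thesis unfolding isum_cx_def S_def n_def by auto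
  next
    case False
    have "\<not> (r0 \<le> r \<and> ereal r < B)"
    proof
      assume "r0 \<le> r \<and> ereal r < B"
      then have "ereal r0 < B" by (meson ereal_less_eq(3) order_le_less_trans)
      then show False using False by simp
    qed
    then show ?thesis unfolding isum_cx_def S_def n_def using False by auto
  qed
  have trEq: "isum_tr n (\<lambda>_. r0) (\<lambda>_. B) r s v = (\<lambda>i. if r0 \<le> s \<and> ereal s < B then v i else 0)" for r s v
    unfolding isum_tr_def by simp
  have lin: "qlinear_on (S r) (M r) (\<phi> r)" if r: "0 \<le> r" for r
    unfolding qlinear_on_def
  proof (intro conjI ballI allI)
    fix v assume "v \<in> S r"
    show "\<phi> r v \<in> M r" unfolding \<phi>_def M_def by auto
  next
    fix v w assume "v \<in> S r" "w \<in> S r"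
    show "\<phi> r (v + w) = \<phi> r v + \<phi> r w" unfolding \<phi>_def by (simp add: qscale_left_distrib)
  next
    fix a v assume "v \<in> S r"
    show "\<phi> r (qscale a v) = qscale a (\<phi> r v)" unfolding \<phi>_def
      by (simp add: qscale_fun_def qscale_rat_def qscale_assoc qscale_zero_right)
  qed
  have bij: "bij_betw (\<phi> r) (S r) (M r)" if r: "0 \<le> r" for r
    unfolding bij_betw_def
  proof
    show "inj_on (\<phi> r) (S r)"
    proof (rule inj_onI)
      fix v w assume v: "v \<in> S r" and w: "w \<in> S r" and e: "\<phi> r v = \<phi> r w"
      show "v = w"
      proof (cases "r0 \<le> r \<and> ereal r < B")
        case True
        then have nz: "xr r \<noteq> 0" using alive by blast
        have e2: "qscale (v 0) (xr r) = qscale (w 0) (xr r)" using e True unfolding \<phi>_def by simp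
        have "qscale (v 0) (xr r) = qscale (v 0 - w 0) (xr r) + qscale (w 0) (xr r)"
          using qscale_left_distrib[of "v 0 - w 0" "w 0" "xr r"] by simp
        then have "qscale (v 0 - w 0) (xr r) = 0" using e2 by simp
        then have "v 0 = w 0" using qscale_eq_zero nz by fastforce
        moreover have "v i = w i" if i: "i \<noteq> 0" for i
        proof -
          have vv: "\<forall>i. v i \<noteq> 0 \<longrightarrow> i = 0" using v unfolding S_def by blast
          have ww: "\<forall>i. w i \<noteq> 0 \<longrightarrow> i = 0" using w unfolding S_def by blast
          have "v i = 0" using vv i by blast
          moreover have "w i = 0" using ww i by blast
          ultimately show ?thesis by simp
        qed
        ultimately show ?thesis by (intro ext) (case_tac "x = 0", simp_all)
      next
        case False
        have vv: "\<forall>i. v i \<noteq> 0 \<longrightarrow> i = 0 \<and> r0 \<le> r \<and> ereal r < B" using v unfolding S_def by blast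
        have ww: "\<forall>i. w i \<noteq> 0 \<longrightarrow> i = 0 \<and> r0 \<le> r \<and> ereal r < B" using w unfolding S_def by blast
        show ?thesis
        proof (rule ext)
          fix i
          have "v i = 0" using vv False by blast
          moreover have "w i = 0" using ww False by blast
          ultimately show "v i = w i" by simp
        qed
      qed
    qed
  next
    show "\<phi> r ` S r = M r"
    proof
      show "\<phi> r ` S r \<subseteq> M r" using lin[OF r] unfolding qlinear_on_def by blast
    next
      show "M r \<subseteq> \<phi> r ` S r"
      proof
        fix u assume u: "u \<in> M r"
        have z0: "(0::nat \<Rightarrow> rat) \<in> S r" unfolding S_def by simp
        have p0: "\<phi> r 0 = 0" unfolding \<phi>_def by (simp add: qscale_zero_left)
        show "u \<in> \<phi> r ` S r"
        proof (cases "r0 \<le> r")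
          case True
          then obtain q where q: "u = qscale q (xr r)" using u M_def by auto
          show ?thesis
          proof (cases "ereal r < B")
            case True
            define v where "v = (\<lambda>i::nat. if i = 0 then q else 0)"
            have "v \<in> S r" unfolding S_def v_def using True \<open>r0 \<le> r\<close> by simp
            moreover have "\<phi> r v = u" unfolding \<phi>_def v_def using q \<open>r0 \<le> r\<close> by simp
            ultimately show ?thesis by blast
          next
            case False
            then have "xr r = 0" using alive \<open>r0 \<le> r\<close> by blast
            then have "u = 0" using q qscale_zero_right by simp
            then show ?thesis using z0 p0 by (metis image_eqI)
          qed
        next
          case False
          then have "u = 0" using u M_def by simp
          then show ?thesis using z0 p0 by (metis image_eqI)
        qed
      qed
    qed
  qed
  have trans: "\<phi> s (isum_tr n (\<lambda>_. r0) (\<lambda>_. B) r s v) = T r s (\<phi> r v)"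
    if rs: "0 \<le> r" "r \<le> s" and v: "v \<in> S r" for r s v
  proof (cases "r0 \<le> r")
    case True
    have L: "qlinear_on (P r) (P s) (T r s)" using pmod_lin[OF pm rs] .
    have R: "T r s (\<phi> r v) = qscale (v 0) (xr s)"
      using True lin_scale[OF L xrP[OF True]] xr_tr[OF True rs(2)] unfolding \<phi>_def by simp
    show ?thesis
    proof (cases "ereal s < B")
      case True
      then show ?thesis using R \<open>r0 \<le> r\<close> rs unfolding trEq \<phi>_def by simp
    next
      case False
      have "r0 \<le> s" using \<open>r0 \<le> r\<close> rs by simp
      then have "xr s = 0" using alive[of s] False by blast
      then show ?thesis using R False \<open>r0 \<le> r\<close> rs unfolding trEq \<phi>_def
        by (simp add: qscale_zero_left qscale_zero_right)
    qed
  next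
    case False
    then have v0: "v 0 = 0" using v unfolding S_def by blast
    have "T r s 0 = 0" using qlinear_zero[OF pmod_lin[OF pm rs]] pmod_sub[OF pm rs(1)] unfolding qsubspace_def by blast
    then have "T r s (\<phi> r v) = 0" using False unfolding \<phi>_def by simp
    moreover have "\<phi> s (isum_tr n (\<lambda>_. r0) (\<lambda>_. B) r s v) = 0"
      unfolding trEq \<phi>_def using v0 by (simp add: qscale_zero_left)
    ultimately show ?thesis by simp
  qed
  have c1: "\<forall>i<n. 0 \<le> r0 \<and> ereal r0 < B" using r0 unfolding n_def by (auto split: if_splits)
  have c2: "\<forall>r\<ge>0. qlinear_on (isum_cx n (\<lambda>_. r0) (\<lambda>_. B) r) (M r) (\<phi> r) \<and>
        bij_betw (\<phi> r) (isum_cx n (\<lambda>_. r0) (\<lambda>_. B) r) (M r)" using lin bij Seq by simp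
  have c3: "\<forall>r s. 0 \<le> r \<and> r \<le> s \<longrightarrow> (\<forall>v\<in>isum_cx n (\<lambda>_. r0) (\<lambda>_. B) r.
        \<phi> s (isum_tr n (\<lambda>_. r0) (\<lambda>_. B) r s v) = T r s (\<phi> r v))" using trans Seq by simp
  have fis: "fin_interval_sum M T"
    unfolding fin_interval_sum_def
    apply (rule exI[of _ n], rule exI[of _ "\<lambda>_. r0"], rule exI[of _ "\<lambda>_. B"], rule exI[of _ \<phi>])
    apply (intro conjI)
      apply (rule c1)
     apply (rule c2)
    apply (rule c3)
    done
  show ?thesis
    apply (rule exI[of _ M])
    using sub trM xM fis by blast
qed

lemma lc_from_ri:
  assumes pm: "is_pmod P T" and R: "\<forall>b\<ge>0. \<forall>y\<in>P b. (\<forall>r>b. T b r y = 0) \<longrightarrow> y = 0"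
  shows "locally_compact_pmod P T"
  unfolding locally_compact_pmod_def
proof (intro allI impI ballI)
  fix r0 x assume r0: "0 \<le> r0" and x: "x \<in> P r0"
  define K where "K = {r. r0 \<le> r \<and> T r0 r x = 0}"
  have up: "r' \<in> K" if "r \<in> K" "r \<le> r'" for r r'
  proof -
    have rr: "r0 \<le> r" "T r0 r x = 0" using that K_def by auto
    have "T r0 r' x = T r r' (T r0 r x)" using pmod_comp[OF pm r0 rr(1) that(2) x] by simp
    also have "\<dots> = 0" using rr(2) qlinear_zero[OF pmod_lin[OF pm _ that(2)]] pmod_sub[OF pm] r0 rr(1)
      unfolding qsubspace_def by simp
    finally show ?thesis using K_def rr(1) that(2) by simp
  qed
  obtain B where HB: "\<forall>r\<ge>r0. (T r0 r x \<noteq> 0 \<longleftrightarrow> ereal r < B)"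
  proof (cases "K = {}")
    case True
    have "\<forall>r\<ge>r0. (T r0 r x \<noteq> 0 \<longleftrightarrow> ereal r < PInfty)" using True K_def by auto
    then show ?thesis using that by blast
  next
    case False
    have bdd: "bdd_below K" unfolding bdd_below_def K_def by auto
    define b where "b = Inf K"
    have rb: "r0 \<le> b" unfolding b_def using False by (intro cInf_greatest) (auto simp: K_def)
    have gt: "r \<in> K" if br: "b < r" for r
    proof -
      obtain k where "k \<in> K" "k < r" using cInf_lessD[OF False, of r] br b_def by blast
      then show ?thesis using up by simp
    qed
    have bK: "b \<in> K"
    proof -
      have b0: "0 \<le> b" using r0 rb by simp
      have yP: "T r0 b x \<in> P b" using lin_mem[OF pmod_lin[OF pm r0 rb] x] .
      have "T b r (T r0 b x) = 0" if br: "b < r" for r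
        using pmod_comp[OF pm r0 rb _ x, of r] br gt[OF br] K_def by simp
      then have "T r0 b x = 0" using R b0 yP by blast
      then show ?thesis using K_def rb by simp
    qed
    have "\<forall>r\<ge>r0. (T r0 r x \<noteq> 0 \<longleftrightarrow> ereal r < ereal b)"
    proof (intro allI impI)
      fix r assume rr: "r0 \<le> r"
      have "r \<in> K \<longleftrightarrow> b \<le> r"
        using cInf_lower[OF _ bdd, of r] b_def up[OF bK] by auto
      then show "(T r0 r x \<noteq> 0 \<longleftrightarrow> ereal r < ereal b)" using rr K_def by auto
    qed
    then show ?thesis using that by blast
  qed
  show "\<exists>M. (\<forall>r\<ge>0. qsubspace (M r) \<and> M r \<subseteq> P r) \<and>
        (\<forall>r s. 0 \<le> r \<and> r \<le> s \<longrightarrow> T r s ` M r \<subseteq> M s) \<and> x \<in> M r0 \<and> fin_interval_sum M T"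
    using cyclic[OF pm r0 x HB] .
qed

lemma final_lemma:
  assumes WO: "Well_order ord"
  and pc: "\<forall>\<beta>\<in>Field ord. is_pcx (Y \<beta>)"
  and hom: "\<forall>\<beta> \<gamma>. (\<beta>, \<gamma>) \<in> ord \<longrightarrow> pcx_hom (Y \<beta>) (Y \<gamma>) (G \<beta> \<gamma>)"
  and idm: "\<forall>\<beta>\<in>Field ord. \<forall>r\<ge>0. \<forall>m. \<forall>y\<in>cx (Y \<beta>) r m. G \<beta> \<beta> r m y = y"
  and comp: "\<forall>\<beta> \<gamma> \<delta>. (\<beta>, \<gamma>) \<in> ord \<and> (\<gamma>, \<delta>) \<in> ord \<longrightarrow>
           (\<forall>r\<ge>0. \<forall>m. \<forall>y\<in>cx (Y \<beta>) r m. G \<gamma> \<delta> r m (G \<beta> \<gamma> r m y) = G \<beta> \<delta> r m y)"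
  and bot: "\<forall>\<beta>\<in>Field ord. (\<forall>\<gamma>\<in>Field ord. (\<beta>, \<gamma>) \<in> ord) \<longrightarrow> (\<forall>r\<ge>0. \<forall>m. cx (Y \<beta>) r m = {0})"
  and succ: "\<forall>\<beta> \<gamma>. wo_succ ord \<beta> \<gamma> \<longrightarrow>
           cell_pushout (Y \<beta>) (Y \<gamma>) (G \<beta> \<gamma>) (J \<beta>) (kk \<beta>) (ss \<beta>) (tt \<beta>) (f \<beta>) (h \<beta>)"
  and lim: "\<forall>\<beta>. wo_limit ord \<beta> \<longrightarrow>
           is_chain_colimit ord {\<gamma>. (\<gamma>, \<beta>) \<in> ord \<and> \<gamma> \<noteq> \<beta>} Y G (Y \<beta>) (\<lambda>\<gamma>. G \<gamma> \<beta>)"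
  and C: "is_chain_colimit ord (Field ord) Y G X c"
  shows "\<forall>k>0. locally_compact_pmod (\<lambda>r. cx X r k) (\<lambda>r s. tr X r s k)"
proof -
  have IND: "\<And>\<gamma>. \<gamma> \<in> Field ord \<Longrightarrow> ri_prop (Y \<gamma>) \<and> (\<forall>\<beta>. (\<beta>, \<gamma>) \<in> ord \<longrightarrow> inj_prop (Y \<beta>) (G \<beta> \<gamma>))"
    using main_ind[OF WO pc hom idm comp bot succ lim] by blast
  have RX: "ri_prop X"
  proof (rule colim_ri[OF C])
    show "\<forall>\<delta>\<in>Field ord. is_pcx (Y \<delta>)" using pc .
    show "\<forall>\<delta>\<in>Field ord. ri_prop (Y \<delta>)" using IND by blast
    show "\<forall>\<delta>\<in>Field ord. \<forall>\<delta>'\<in>Field ord. (\<delta>, \<delta>') \<in> ord \<longrightarrow> inj_prop (Y \<delta>) (G \<delta> \<delta>')" using IND by blast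
  qed
  have pX: "is_pcx X" using colim_pcx[OF C] .
  show ?thesis
  proof (intro allI impI)
    fix k :: nat assume k: "0 < k"
    show "locally_compact_pmod (\<lambda>r. cx X r k) (\<lambda>r s. tr X r s k)"
      using lc_from_ri[OF pcx_pmod[OF pX]] RX k unfolding ri_prop_def by blast
  qed
qed

theorem mainTheorem19:
  fixes X :: "'a::qvs pcx"
  assumes "Icell_complex TYPE('i) TYPE('b::qvs) TYPE('j) X"
  shows "\<forall>k>0. locally_compact_pmod (\<lambda>r. cx X r k) (\<lambda>r s. tr X r s k)"
  using assms unfolding Icell_complex_def
  apply (elim exE conjE)
  apply (rule final_lemma; assumption)
  done

end
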